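(* Let $k\ge2$, $M\ge1$, $N\ge1$, and let $g\colon[N]^M\to\{0,1\}^k$ be a function such that no single input coordinate affects all $k$ output bits of $g$. Let $\mathbf{Z}=g(\mathbf{U}_{[N]}^M)$. Then at least one of the following holds: (1) $\Pr[\mathbf{Z}\notin\{0^k,1^k\}]\ge \frac{1}{100k}$; or (2) there is $z\in\{0^k,1^k\}$ with $\Pr[\mathbf{Z}=z]\ge 2/3$.
   Context: $\mathbf{U}_{[N]}^M$ is the uniform distribution on $[N]^M$. An input coordinate affects an output bit if that bit depends on the coordinate (i.e., changing only that coordinate can change the bit). *)

theory Defs
  imports "HOL-Probability.Probability"
begin

text \<open>Inputs: [N]^M, with [N] = {1..N}, represented as extensional functions on the
index set {..<M}. Outputs in {0,1}^k represented as extensional bool-valued functions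
on {..<k} (True = 1).\<close>

definition inputs :: "nat \<Rightarrow> nat \<Rightarrow> (nat \<Rightarrow> nat) set" where
  "inputs M N = PiE {..<M} (\<lambda>_. {1..N})"

definition outputs :: "nat \<Rightarrow> (nat \<Rightarrow> bool) set" where
  "outputs k = PiE {..<k} (\<lambda>_. UNIV)"

definition affects :: "nat \<Rightarrow> nat \<Rightarrow> ((nat \<Rightarrow> nat) \<Rightarrow> (nat \<Rightarrow> bool)) \<Rightarrow> nat \<Rightarrow> nat \<Rightarrow> bool" where
  "affects M N g i j \<longleftrightarrow>
     (\<exists>x\<in>inputs M N. \<exists>y\<in>inputs M N. (\<forall>l. l \<noteq> i \<longrightarrow> x l = y l) \<and> g x j \<noteq> g y j)"

definition const_str :: "nat \<Rightarrow> bool \<Rightarrow> (nat \<Rightarrow> bool)" where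
  "const_str k b = (\<lambda>j. if j < k then b else undefined)"

definition Zdist :: "nat \<Rightarrow> nat \<Rightarrow> ((nat \<Rightarrow> nat) \<Rightarrow> (nat \<Rightarrow> bool)) \<Rightarrow> (nat \<Rightarrow> bool) pmf" where
  "Zdist M N g = map_pmf g (pmf_of_set (inputs M N))"

end

theory Submission
  imports Defs
begin

lemma same_bit:
  assumes "finite D"
  shows "\<And>u. u \<in> inputs M N \<Longrightarrow> v \<in> inputs M N \<Longrightarrow> (\<forall>l. l \<notin> D \<longrightarrow> u l = v l)
    \<Longrightarrow> (\<forall>i\<in>D. \<not> affects M N g i j) \<Longrightarrow> g u j = g v j"
  using assms
proof (induction D rule: finite_induct)
  case empty
  then have "u = v" by auto
  then show ?case by simp
next
  case (insert i D)
  define w where "w = u(i := v i)"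
  have wX: "w \<in> inputs M N"
    using insert.prems(1,2) unfolding w_def inputs_def by (auto simp: PiE_iff extensional_def)
  have "\<forall>l. l \<notin> D \<longrightarrow> w l = v l" using insert.prems(3) unfolding w_def by auto
  then have "g w j = g v j"
    using insert.IH[OF wX insert.prems(2)] insert.prems(4) by auto
  moreover have "g u j = g w j"
  proof (rule ccontr)
    assume "g u j \<noteq> g w j"
    moreover have "\<forall>l. l \<noteq> i \<longrightarrow> u l = w l" unfolding w_def by auto
    ultimately have "affects M N g i j" unfolding affects_def
      using insert.prems(1) wX by blast
    then show False using insert.prems(4) by auto
  qed
  ultimately show ?case by simp
qed

lemma hyb_in:
  assumes "x \<in> inputs M N" "y \<in> inputs M N"
  shows "(\<lambda>i. if P i then y i else x i) \<in> inputs M N"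
  using assms unfolding inputs_def by (auto simp: PiE_iff extensional_def)

lemma card_hyb:
  assumes "finite X" "\<And>x y. x \<in> X \<Longrightarrow> y \<in> X \<Longrightarrow> (\<lambda>i. if P i then y i else x i) \<in> X"
  shows "card {(x,y)\<in>X \<times> X. (\<lambda>i. if P i then y i else x i) \<in> C} \<le> card (C \<inter> X) * card X"
proof -
  define h where "h = (\<lambda>(x::'a\<Rightarrow>'b,y). ((\<lambda>i. if P i then y i else x i), (\<lambda>i. if P i then x i else y i)))"
  have hh: "h (h p) = p" for p unfolding h_def by (cases p) auto
  have inj: "inj_on h S" for S by (metis hh inj_onI)
  have sub: "h ` {(x,y)\<in>X \<times> X. (\<lambda>i. if P i then y i else x i) \<in> C} \<subseteq> (C \<inter> X) \<times> X"
  proof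
    fix q assume "q \<in> h ` {(x,y)\<in>X \<times> X. (\<lambda>i. if P i then y i else x i) \<in> C}"
    then obtain x y where xy: "x \<in> X" "y \<in> X" "(\<lambda>i. if P i then y i else x i) \<in> C" and q: "q = h (x,y)" by auto
    have "(\<lambda>i. if P i then x i else y i) = (\<lambda>i. if \<not> P i then y i else x i)" by auto
    then have "(\<lambda>i. if P i then x i else y i) \<in> X" using assms(2)[OF xy(1,2), of ] assms(2)[OF xy(2) xy(1)] by metis
    then show "q \<in> (C \<inter> X) \<times> X" using q xy assms(2)[OF xy(1,2)] unfolding h_def by auto
  qed
  have "card {(x,y)\<in>X \<times> X. (\<lambda>i. if P i then y i else x i) \<in> C} \<le> card ((C \<inter> X) \<times> X)"
    using card_inj_on_le[OF inj sub] assms(1) by auto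
  then show ?thesis by (simp add: card_cartesian_product)
qed


theorem claim5:
  fixes k M N :: nat and g :: "(nat \<Rightarrow> nat) \<Rightarrow> (nat \<Rightarrow> bool)"
  assumes "k \<ge> 2" and "M \<ge> 1" and "N \<ge> 1"
    and "\<forall>x\<in>inputs M N. g x \<in> outputs k"
    and "\<forall>i<M. \<exists>j<k. \<not> affects M N g i j"
  shows "measure_pmf.prob (Zdist M N g) (- {const_str k False, const_str k True}) \<ge> 1 / (100 * real k)
    \<or> (\<exists>z\<in>{const_str k False, const_str k True}. measure_pmf.prob (Zdist M N g) {z} \<ge> 2 / 3)"
proof -
  define X where "X = inputs M N"
  define c0 where "c0 = const_str k False"
  define c1 where "c1 = const_str k True"
  have "c0 0 \<noteq> c1 0" using assms(1) unfolding c0_def c1_def const_str_def by simp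
  then have c01: "c0 \<noteq> c1" by auto
  have finX: "finite X" unfolding X_def inputs_def by (auto intro: finite_PiE)
  have "(\<lambda>i. if i < M then 1 else undefined) \<in> X" using assms(3) unfolding X_def inputs_def by (auto simp: PiE_iff extensional_def)
  then have neX: "X \<noteq> {}" by auto
  obtain f where f: "\<forall>i<M. f i < k \<and> \<not> affects M N g i (f i)" using assms(5) by metis
  define hyb where "hyb j x y = (\<lambda>i. if i < M \<and> f i < j then y i else x i)" for j :: nat and x y :: "nat \<Rightarrow> nat"
  define A where "A = {x\<in>X. g x = c0}"
  define B where "B = {x\<in>X. g x = c1}"
  define C where "C = {x\<in>X. g x \<notin> {c0, c1}}"
  have hybX: "hyb j x y \<in> X" if "x \<in> X" "y \<in> X" for j x y
    using hyb_in[of x M N y "\<lambda>i. i < M \<and> f i < j"] that unfolding hyb_def X_def by blast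
  have hyb0: "hyb 0 x y = x" for x y unfolding hyb_def by auto
  have hybk: "hyb k x y = y" if "x \<in> X" "y \<in> X" for x y
  proof
    fix i show "hyb k x y i = y i"
    proof (cases "i < M")
      case True then show ?thesis using f unfolding hyb_def by auto
    next
      case False then show ?thesis using that unfolding hyb_def X_def inputs_def by (auto simp: PiE_iff extensional_def)
    qed
  qed
  have step: False if "x \<in> X" "y \<in> X" "j < k" "g (hyb j x y) = c0" "g (hyb (Suc j) x y) = c1" for x y j
  proof -
    have fin: "finite {i. i < M \<and> f i = j}" by auto
    have uX: "hyb j x y \<in> inputs M N" and vX: "hyb (Suc j) x y \<in> inputs M N" using hybX that unfolding X_def by auto
    have agr: "\<forall>l. l \<notin> {i. i < M \<and> f i = j} \<longrightarrow> hyb j x y l = hyb (Suc j) x y l"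
      unfolding hyb_def by auto
    have naf: "\<forall>i\<in>{i. i < M \<and> f i = j}. \<not> affects M N g i j" using f by auto
    have "g (hyb j x y) j = g (hyb (Suc j) x y) j" by (rule same_bit[OF fin uX vX agr naf])
    then show False using that(3-5) unfolding c0_def c1_def const_str_def by auto
  qed
  have key: "\<exists>j\<in>{1..<k}. hyb j x y \<in> C" if "x \<in> A" "y \<in> B" for x y
  proof (rule ccontr)
    assume na: "\<not> ?thesis"
    have xX: "x \<in> X" and yX: "y \<in> X" using that unfolding A_def B_def by auto
    have inab: "g (hyb j x y) \<in> {c0, c1}" if "1 \<le> j" "j \<le> k" for j
    proof (cases "j = k")
      case True then show ?thesis using hybk[OF xX yX] \<open>y \<in> B\<close> unfolding B_def by auto
    next
      case False then show ?thesis using na that hybX[OF xX yX, of j] unfolding C_def by auto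
    qed
    have "j \<le> k \<Longrightarrow> g (hyb j x y) = c0" for j
    proof (induction j)
      case 0 then show ?case using hyb0 \<open>x \<in> A\<close> unfolding A_def by auto
    next
      case (Suc j)
      then have "g (hyb j x y) = c0" by auto
      moreover have "g (hyb (Suc j) x y) \<in> {c0, c1}" using inab[of "Suc j"] Suc.prems by auto
      ultimately show ?case using step[OF xX yX, of j] Suc.prems by auto
    qed
    then have "g y = c0" using hybk[OF xX yX] by (metis order_refl)
    then show False using \<open>y \<in> B\<close> c01 unfolding B_def by auto
  qed
  have sub: "A \<times> B \<subseteq> (\<Union>j\<in>{1..<k}. {(x,y)\<in>X \<times> X. hyb j x y \<in> C})"
  proof
    fix p assume "p \<in> A \<times> B"
    then obtain x y where p: "p = (x,y)" "x \<in> A" "y \<in> B" by auto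
    then have "x \<in> X" "y \<in> X" unfolding A_def B_def by auto
    then show "p \<in> (\<Union>j\<in>{1..<k}. {(x,y)\<in>X \<times> X. hyb j x y \<in> C})" using key[OF p(2,3)] p(1) by auto
  qed
  have finA: "finite A" "finite B" "finite C" using finX unfolding A_def B_def C_def by auto
  have "card A * card B = card (A \<times> B)" by (simp add: card_cartesian_product)
  also have "\<dots> \<le> card (\<Union>j\<in>{1..<k}. {(x,y)\<in>X \<times> X. hyb j x y \<in> C})"
  proof (rule card_mono[OF _ sub])
    have "(\<Union>j\<in>{1..<k}. {(x,y)\<in>X \<times> X. hyb j x y \<in> C}) \<subseteq> X \<times> X" by auto
    then show "finite (\<Union>j\<in>{1..<k}. {(x,y)\<in>X \<times> X. hyb j x y \<in> C})" using finX finite_subset by blast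
  qed
  also have "\<dots> \<le> (\<Sum>j\<in>{1..<k}. card {(x,y)\<in>X \<times> X. hyb j x y \<in> C})"
  proof (rule card_UN_le)
    show "finite {1..<k}" by simp
  qed
  also have "\<dots> \<le> (\<Sum>j\<in>{1..<k}. card (C \<inter> X) * card X)"
  proof (rule sum_mono)
    fix j
    show "card {(x,y)\<in>X \<times> X. hyb j x y \<in> C} \<le> card (C \<inter> X) * card X"
      using card_hyb[OF finX, of "\<lambda>i. i < M \<and> f i < j" C] hybX unfolding hyb_def by blast
  qed
  also have "\<dots> = (k - 1) * card C * card X" using C_def by (simp add: Int_absorb2)
  finally have prodle: "card A * card B \<le> (k - 1) * card C * card X" .
  have part: "card A + card B + card C = card X"
  proof -
    have "X = A \<union> B \<union> C" unfolding A_def B_def C_def by auto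
    moreover have "A \<inter> B = {}" "(A \<union> B) \<inter> C = {}" using c01 unfolding A_def B_def C_def by auto
    ultimately show ?thesis using finA card_Un_disjoint[of A B] card_Un_disjoint[of "A \<union> B" C] by simp
  qed
  have prob: "measure_pmf.prob (Zdist M N g) S = card {x\<in>X. g x \<in> S} / card X" for S
  proof -
    have "measure_pmf.prob (Zdist M N g) S = measure_pmf.prob (pmf_of_set X) (g -` S)"
      unfolding Zdist_def X_def by simp
    also have "\<dots> = card (X \<inter> g -` S) / card X" using measure_pmf_of_set[OF neX finX] by simp
    also have "X \<inter> g -` S = {x\<in>X. g x \<in> S}" by auto
    finally show ?thesis .
  qed
  have pC: "measure_pmf.prob (Zdist M N g) (- {c0, c1}) = card C / card X"
    unfolding prob C_def by simp
  have pA: "measure_pmf.prob (Zdist M N g) {c0} = card A / card X"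
    unfolding prob A_def by simp
  have pB: "measure_pmf.prob (Zdist M N g) {c1} = card B / card X"
    unfolding prob B_def by simp
  show ?thesis
  proof (rule ccontr)
    assume na: "\<not> ?thesis"
    define n where "n = real (card X)"
    define a where "a = real (card A) / n"
    define b where "b = real (card B) / n"
    define c where "c = real (card C) / n"
    have npos: "n > 0" unfolding n_def using finX neX by (simp add: card_gt_0_iff)
    have hc: "c < 1 / (100 * real k)" and ha: "a < 2/3" and hb: "b < 2/3"
      using na pA pB pC unfolding a_def b_def c_def n_def c0_def c1_def by auto
    have sum1: "a + b + c = 1" using part npos unfolding a_def b_def c_def n_def
      by (simp add: field_simps flip: of_nat_add)
    have k2: "real k \<ge> 2" using assms(1) by simp
    have "1 / (100 * real k) \<le> 1/200" using k2 by (simp add: divide_simps)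
    then have "c < 1/200" using hc by linarith
    have c0': "c \<ge> 0" unfolding c_def using npos by simp
    have "a > 0.3" "b > 0.3" using sum1 ha hb \<open>c < 1/200\<close> by auto
    then have "0.3 * 0.3 < a * b" by (intro mult_strict_mono) auto
    then have ab: "a * b > 0.09" by simp
    have "real (card A) * real (card B) \<le> (real k - 1) * real (card C) * n"
    proof -
      have "real (card A * card B) \<le> real ((k - 1) * card C * card X)" using prodle by (simp only: of_nat_le_iff)
      then show ?thesis using assms(1) unfolding n_def by (simp add: of_nat_diff)
    qed
    then have "a * b \<le> (real k - 1) * c" using npos unfolding a_def b_def c_def
      by (simp add: field_simps power2_eq_square)
    also have "\<dots> \<le> real k * c" using c0' by (simp add: mult_right_mono)
    also have "\<dots> < real k * (1 / (100 * real k))" by (rule mult_strict_left_mono[OF hc]) (use k2 in simp)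
    also have "\<dots> = 1/100" using k2 by simp
    finally show False using ab by simp
  qed
qed

end
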